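(* Let $(\rho_0,p_0)$ solve the TOV system on $[0,R)$ with regular centre, mass function $m_0$, $g_0=\frac{m_0+4\pi p_0r^3}{r^2[1-2m_0/r]}$, $I_0(r)=\int_0^rg_0$. For real parameters $\Delta p$ and $\delta\rho_c$ define $$\delta p_1(r)=\frac{\Delta p\sqrt{1-2m_0/r}\,e^{-2I_0(r)}}{1+4\pi\Delta p\int_0^r\frac{s\,e^{-2I_0(s)}}{\sqrt{1-2m_0(s)/s}}ds},\qquad g_1(r)=g_0(r)+\frac{4\pi\,\delta p_1(r)\,r}{1-2m_0(r)/r},$$ $$\delta m(r)=\frac{4\pi r^3\,\delta\rho_c}{3[1+rg_1]^2}\exp\Bigl\{2\int_0^rg_1\frac{1-sg_1}{1+sg_1}ds\Bigr\},\qquad \delta p(r)=\delta p_1(r)-\frac{\delta m(r)}{4\pi r^3}\,\frac{1+8\pi[p_0+\delta p_1]r^2}{1-2m_0/r}.$$ Then, on any interval $[0,R')$ on which all denominators are positive and $1-2(m_0+\delta m)/r>0$, the pair $(\rho,p)$ with $m=m_0+\delta m$, $\rho=m'/(4\pi r^2)$, $p=p_0+\delta p$ solves the TOV system with regular centre, with central density $\rho_0(0)+\delta\rho_c$ and central pressure $p_0(0)+\delta p_c$, where $\delta p_c=\Delta p-\delta\rho_c/3$; the two parameters $\Delta p,\delta\rho_c$ are independent. *)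

theory Defs
  imports "HOL-Analysis.Analysis"
begin

text \<open>Geometrised units G = c = 1. Mass function of a density profile.\<close>
definition tov_mass :: "(real \<Rightarrow> real) \<Rightarrow> real \<Rightarrow> real" where
  "tov_mass \<rho> r = 4 * pi * integral {0..r} (\<lambda>s. s^2 * \<rho> s)"

definition tov_regular :: "real \<Rightarrow> (real \<Rightarrow> real) \<Rightarrow> (real \<Rightarrow> real) \<Rightarrow> bool" where
  "tov_regular R \<rho> p \<longleftrightarrow>
     continuous_on {0..<R} \<rho> \<and> continuous_on {0..<R} p \<and>
     (\<forall>r\<in>{0<..<R}. 1 - 2 * tov_mass \<rho> r / r > 0) \<and>
     (\<forall>r\<in>{0<..<R}. (p has_real_derivative
        - (\<rho> r + p r) * (tov_mass \<rho> r + 4 * pi * p r * r^3)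
          / (r^2 * (1 - 2 * tov_mass \<rho> r / r))) (at r))"

end

theory Submission
  imports Defs
begin

lemma at_right_eq_Ico: "0 < (b::real) \<Longrightarrow> at_right 0 = at 0 within {0..<b}"
  by (intro at_within_nhd[of _ "{-1<..<b}"]) auto

lemma at_right_eq_Icc: "0 < (b::real) \<Longrightarrow> at_right 0 = at 0 within {0..b}"
  by (intro at_within_nhd[of _ "{-1<..<b}"]) auto

lemma cont_from_parts:
  fixes f :: "real \<Rightarrow> real"
  assumes "0 < R" "continuous_on {0<..<R} f" "(f \<longlongrightarrow> f 0) (at_right 0)"
  shows "continuous_on {0..<R} f"
  unfolding continuous_on_eq_continuous_within
proof
  fix x assume x: "x \<in> {0..<R}"
  show "continuous (at x within {0..<R}) f"
  proof (cases "x = 0")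
    case True
    then show ?thesis using assms at_right_eq_Ico[of R] by (simp add: continuous_within)
  next
    case False
    then have "x \<in> {0<..<R}" using x by auto
    then have "isCont f x" using assms(2) continuous_on_interior[of "{0<..<R}" f x] by auto
    then show ?thesis using continuous_at_imp_continuous_at_within by blast
  qed
qed

lemma cont_at_right:
  fixes f :: "real \<Rightarrow> real"
  assumes "0 < R" "continuous_on {0..<R} f"
  shows "(f \<longlongrightarrow> f 0) (at_right 0)"
proof -
  have "continuous (at 0 within {0..<R}) f" using assms continuous_on_eq_continuous_within[of "{0..<R}" f] by auto
  then show ?thesis using at_right_eq_Ico[OF assms(1)] by (simp add: continuous_within)
qed

lemma cont_interior:
  fixes f :: "real \<Rightarrow> real"
  assumes "continuous_on {0..<R} f" "0 < x" "x < R"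
  shows "isCont f x"
proof -
  have "continuous_on {0<..<R} f" using assms(1) by (rule continuous_on_subset) auto
  then show ?thesis using assms continuous_on_interior[of "{0<..<R}" f x] by auto
qed

lemma integral_deriv:
  fixes f :: "real \<Rightarrow> real"
  assumes "continuous_on {0..<R} f" "0 < x" "x < R"
  shows "((\<lambda>u. integral {0..u} f) has_real_derivative f x) (at x)"
proof -
  define b where "b = (x + R) / 2"
  have "continuous_on {0..b} f" using assms(1) by (rule continuous_on_subset) (use assms in \<open>auto simp: b_def\<close>)
  then have "((\<lambda>u. integral {0..u} f) has_vector_derivative f x) (at x within {0..b})"
    using assms by (intro integral_has_vector_derivative) (auto simp: b_def)
  moreover have "at x within {0..b} = at x" using assms by (intro at_within_Icc_at) (auto simp: b_def)
  ultimately show ?thesis by (simp add: has_real_derivative_iff_has_vector_derivative)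
qed

lemma integral_cont:
  fixes f :: "real \<Rightarrow> real"
  assumes "continuous_on {0..<R} f" "0 < R"
  shows "continuous_on {0..<R} (\<lambda>u. integral {0..u} f)"
proof (rule cont_from_parts[OF assms(2)])
  show "continuous_on {0<..<R} (\<lambda>u. integral {0..u} f)"
    by (rule DERIV_continuous_on[where D=f]) (use integral_deriv[OF assms(1)] in \<open>auto intro: has_field_derivative_at_within\<close>)
  define b where "b = R / 2"
  have "continuous_on {0..b} f" using assms(1) by (rule continuous_on_subset) (use assms in \<open>auto simp: b_def\<close>)
  then have "((\<lambda>u. integral {0..u} f) has_vector_derivative f 0) (at 0 within {0..b})"
    using assms by (intro integral_has_vector_derivative) (auto simp: b_def)
  then have "continuous (at 0 within {0..b}) (\<lambda>u. integral {0..u} f)"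
    using has_vector_derivative_continuous by blast
  then show "((\<lambda>u. integral {0..u} f) \<longlongrightarrow> integral {0..0} f) (at_right 0)"
    using at_right_eq_Icc[of b] assms by (simp add: continuous_within b_def)
qed


lemma P1_alg:
  fixes r s E Q dP m0 \<rho>0 p0 :: real
  assumes r: "r > 0" and s: "s > 0" and Q: "Q \<noteq> 0"
    and b: "s^2 = 1 - 2 * m0 / r"
  shows "- (\<rho>0 + p0) * ((m0 + 4*pi*p0*r^3) / (r^2 * s^2))
     + (dP * (((- (2 * ((4*pi*r^2*\<rho>0) * r - m0) / r^2)) / (2 * s)) * E
               + s * (- 2 * ((m0 + 4*pi*p0*r^3) / (r^2 * s^2)) * E)) / Q
        - dP * s * E * (4*pi*dP*(r * E / s)) / Q^2)
   = - (\<rho>0 + (p0 + dP * s * E / Q)) * ((m0 + 4*pi*p0*r^3) / (r^2 * s^2) + 4*pi*(dP * s * E / Q)*r / s^2)"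
proof -
  have m0: "m0 = r * (1 - s^2) / 2" using b r by (simp add: field_simps)
  show ?thesis unfolding m0 using r s Q
    by (simp add: field_simps power2_eq_square power3_eq_cube)
qed


lemma P1_alg2:
  fixes r s E Q dP m0 \<rho>0 p0 b B g0 :: real
  assumes r: "r > 0" and s: "s > 0" and Q: "Q \<noteq> 0"
    and b: "b = 1 - 2 * m0 / r" "s^2 = b"
    and B: "B = - (2 * ((4*pi*r^2*\<rho>0) * r - m0) / r^2)"
    and g0: "g0 = (m0 + 4*pi*p0*r^3) / (r^2 * b)"
  shows "- (\<rho>0 + p0) * g0 +
     ((dP * s * (- 2 * g0 * E) + dP * (B / (2 * s)) * E) * Q - dP * s * E * (4*pi*dP*(r * E / s))) / (Q * Q)
   = - (\<rho>0 + (p0 + dP * s * E / Q)) * (g0 + 4*pi*(dP * s * E / Q)*r / b)"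
proof -
  have "- (\<rho>0 + p0) * g0 +
     ((dP * s * (- 2 * g0 * E) + dP * (B / (2 * s)) * E) * Q - dP * s * E * (4*pi*dP*(r * E / s))) / (Q * Q)
    = - (\<rho>0 + p0) * ((m0 + 4*pi*p0*r^3) / (r^2 * s^2))
     + (dP * (((- (2 * ((4*pi*r^2*\<rho>0) * r - m0) / r^2)) / (2 * s)) * E
               + s * (- 2 * ((m0 + 4*pi*p0*r^3) / (r^2 * s^2)) * E)) / Q
        - dP * s * E * (4*pi*dP*(r * E / s)) / Q^2)"
    unfolding B g0 b(2) using Q by (simp add: field_simps power2_eq_square)
  also have "\<dots> = - (\<rho>0 + (p0 + dP * s * E / Q)) * ((m0 + 4*pi*p0*r^3) / (r^2 * s^2) + 4*pi*(dP * s * E / Q)*r / s^2)"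
    by (rule P1_alg[OF r s Q]) (use b in simp)
  finally show ?thesis unfolding g0 b(2) .
qed

lemma dm_alg:
  fixes x y G e c :: real
  assumes x: "x > 0" and u: "1 + x * y > 0"
  shows "((3 * x^2 * (4*pi)) * c * (3*(1+x*y)^2) - 4*pi*x^3*c*(2*((y + G*x)*(1+x*y))*3))
      / (3*(1+x*y)^2*(3*(1+x*y)^2)) * e
    + e*(2*(y*(1-x*y)/(1+x*y))) * (4*pi*x^3*c/(3*(1+x*y)^2))
    = 4*pi*x^3*c/(3*(1+x*y)^2)*e * (3/x + 3*y - 2*x*G - 2*x*y^2)/(1+x*y)"
proof -
  define v where "v = 1 + x * y"
  have y: "y = (v - 1) / x" using x by (simp add: v_def)
  have v: "v > 0" using u by (simp add: v_def)
  have vv: "1 + x * ((v - 1) / x) = v" using x by simp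
  show ?thesis unfolding y vv using x v by (simp add: field_simps power2_eq_square power3_eq_cube)
qed

lemma rho_alg:
  fixes x y G e c u :: real
  assumes x: "x > 0" and u: "u > 0"
  shows "(4 * pi * x^3 * c / (3 * u^2) * e * (3 / x + 3 * y - 2 * x * G - 2 * x * y^2) / u) / (4 * pi * x^2)
    = c * e / (3 * u^2) * (3 + 3 * x * y - 2 * (x^2 * G) - 2 * x^2 * y^2) / u"
  using x u by (simp add: field_simps power2_eq_square power3_eq_cube)

lemma dm_div_alg:
  fixes x c u e :: real
  assumes "x > 0"
  shows "4 * pi * x^3 * c / (3 * u^2) * e / (4 * pi * x^3) = c * e / (3 * u^2)"
  using assms by simp

lemma b_alg:
  fixes r b m0 p1 :: real
  assumes r: "r > 0" and b: "b > 0" "b = 1 - 2 * m0 / r"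
  shows "(1 + 8 * pi * p1 * r^2) / b = 1 + 2 * r * ((m0 + 4*pi*p1*r^3)/(r^2*b))"
proof -
  have m0: "m0 = r * (1 - b) / 2" using b r by (simp add: field_simps)
  show ?thesis unfolding m0 using r b(1) by (simp add: field_simps power2_eq_square power3_eq_cube)
qed

lemma final_alg:
  fixes r m0 dm p1 \<rho>0 g1 G b D :: real
  assumes r: "r > 0" and b: "b > 0" "b = 1 - 2 * m0 / r"
    and g1: "g1 = (m0 + 4*pi*p1*r^3) / (r^2 * b)"
    and d1: "1 + r * g1 > 0" and d3: "1 - 2 * (m0 + dm) / r > 0"
    and D: "D = dm * (3 / r + 3 * g1 - 2 * r * G - 2 * r * g1^2) / (1 + r * g1)"
  shows "- ((\<rho>0 + D / (4*pi*r^2)) + (p1 - dm * (1 + 2*r*g1) / (4*pi*r^3)))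
      * ((m0 + dm) + 4 * pi * (p1 - dm * (1 + 2*r*g1) / (4*pi*r^3)) * r^3)
      / (r^2 * (1 - 2 * (m0 + dm) / r))
    = - (\<rho>0 + p1) * g1 - (D * (1 + 2*r*g1) + dm * (2*g1 + 2*r*G)) / (4*pi*r^3)
      + 3 * dm * (1 + 2*r*g1) / (4*pi*r^4)"
proof -
  have e1: "(m0 + dm) + 4 * pi * (p1 - dm * (1 + 2*r*g1) / (4*pi*r^3)) * r^3
      = g1 * (r^2 * (1 - 2 * (m0 + dm) / r))"
  proof -
    have m0: "m0 = r * (1 - b) / 2" using b r by (simp add: field_simps)
    show ?thesis using r b unfolding g1 m0 by (simp add: field_simps power2_eq_square power3_eq_cube)
  qed
  have nz: "r^2 * (1 - 2 * (m0 + dm) / r) \<noteq> 0" using r d3 by simp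
  have "- ((\<rho>0 + D / (4*pi*r^2)) + (p1 - dm * (1 + 2*r*g1) / (4*pi*r^3)))
      * ((m0 + dm) + 4 * pi * (p1 - dm * (1 + 2*r*g1) / (4*pi*r^3)) * r^3)
      / (r^2 * (1 - 2 * (m0 + dm) / r))
     = - ((\<rho>0 + D / (4*pi*r^2)) + (p1 - dm * (1 + 2*r*g1) / (4*pi*r^3))) * g1"
    unfolding e1 using nz by (metis (no_types) mult.assoc nonzero_mult_div_cancel_right)
  also have "\<dots> = - (\<rho>0 + p1) * g1 - (D * (1 + 2*r*g1) + dm * (2*g1 + 2*r*G)) / (4*pi*r^3)
      + 3 * dm * (1 + 2*r*g1) / (4*pi*r^4)"
  proof -
    have key: "D * r * (1 + r*g1) = dm * (3 + 3*r*g1 - 2*r^2*G - 2*r^2*g1^2)"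
    proof -
      have "D * (1 + r*g1) = dm * (3 / r + 3 * g1 - 2 * r * G - 2 * r * g1^2)"
        unfolding D using d1 by simp
      then have "D * r * (1 + r*g1) = r * (dm * (3 / r + 3 * g1 - 2 * r * G - 2 * r * g1^2))"
        by (metis mult.assoc mult.commute)
      also have "\<dots> = dm * (3 + 3*r*g1 - 2*r^2*G - 2*r^2*g1^2)"
        using r by (simp add: field_simps power2_eq_square)
      finally show ?thesis .
    qed
    have r4: "r^4 = r^2 * r^2" by algebra
    have "- ((\<rho>0 + D / (4*pi*r^2)) + (p1 - dm * (1 + 2*r*g1) / (4*pi*r^3))) * g1
      - (- (\<rho>0 + p1) * g1 - (D * (1 + 2*r*g1) + dm * (2*g1 + 2*r*G)) / (4*pi*r^3)
      + 3 * dm * (1 + 2*r*g1) / (4*pi*r^4))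
      = (D * r * (1 + r*g1) - dm * (3 + 3*r*g1 - 2*r^2*G - 2*r^2*g1^2)) / (4*pi*r^4)"
      using r unfolding r4 by (simp add: field_simps power2_eq_square power3_eq_cube)
    then show ?thesis using key by simp
  qed
  finally show ?thesis .
qed


lemma ev_right_lt: "0 < (R::real) \<Longrightarrow> eventually (\<lambda>x. 0 < x \<and> x < R) (at_right 0)"
  unfolding eventually_at_right_field by (intro exI[of _ R]) auto

lemma m0_facts:
  assumes tov: "tov_regular R \<rho>0 p0" and R: "0 < R"
  shows "continuous_on {0..<R} (tov_mass \<rho>0)"
    and "tov_mass \<rho>0 0 = 0"
    and "\<And>x. 0 < x \<Longrightarrow> x < R \<Longrightarrow> (tov_mass \<rho>0 has_real_derivative 4*pi*(x^2*\<rho>0 x)) (at x)"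
    and "((\<lambda>r. tov_mass \<rho>0 r / r^3) \<longlongrightarrow> 4*pi/3 * \<rho>0 0) (at_right 0)"
proof -
  have c\<rho>: "continuous_on {0..<R} \<rho>0" using tov unfolding tov_regular_def by auto
  have cf: "continuous_on {0..<R} (\<lambda>s. s^2 * \<rho>0 s)" by (intro continuous_intros c\<rho>)
  have tm: "tov_mass \<rho>0 = (\<lambda>r. 4 * pi * integral {0..r} (\<lambda>s. s^2 * \<rho>0 s))"
    by (auto simp: tov_mass_def fun_eq_iff)
  show c: "continuous_on {0..<R} (tov_mass \<rho>0)" unfolding tm
    by (intro continuous_intros integral_cont[OF cf R])
  show z: "tov_mass \<rho>0 0 = 0" by (simp add: tov_mass_def)
  show d: "(tov_mass \<rho>0 has_real_derivative 4*pi*(x^2*\<rho>0 x)) (at x)" if "0 < x" "x < R" for x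
    unfolding tm by (intro DERIV_cmult integral_deriv[OF cf] that)
  show "((\<lambda>r. tov_mass \<rho>0 r / r^3) \<longlongrightarrow> 4*pi/3 * \<rho>0 0) (at_right 0)"
  proof (rule lhopital_right_0[where f'="\<lambda>x. 4*pi*(x^2*\<rho>0 x)" and g'="\<lambda>x. 3 * x^2"])
    show "(tov_mass \<rho>0 \<longlongrightarrow> 0) (at_right 0)" using cont_at_right[OF R c] z by simp
    show "((\<lambda>r. r^3) \<longlongrightarrow> 0) (at_right (0::real))"
      by (rule tendsto_eq_intros | simp)+
    show "\<forall>\<^sub>F x in at_right 0. x ^ 3 \<noteq> (0::real)"
      using ev_right_lt[OF R] by eventually_elim auto
    show "\<forall>\<^sub>F x in at_right 0. 3 * x ^ 2 \<noteq> (0::real)"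
      using ev_right_lt[OF R] by eventually_elim auto
    show "\<forall>\<^sub>F x in at_right 0. (tov_mass \<rho>0 has_real_derivative 4*pi*(x^2*\<rho>0 x)) (at x)"
      using ev_right_lt[OF R] by eventually_elim (auto intro: d)
    show "\<forall>\<^sub>F x in at_right 0. ((\<lambda>r. r^3) has_real_derivative 3 * x^2) (at x)"
      by (intro always_eventually allI) (rule derivative_eq_intros | simp)+
    have "((\<lambda>x. 4*pi/3 * \<rho>0 x) \<longlongrightarrow> 4*pi/3 * \<rho>0 0) (at_right 0)"
      by (intro tendsto_intros cont_at_right[OF R c\<rho>])
    moreover have "\<forall>\<^sub>F x in at_right 0. 4*pi/3 * \<rho>0 x = 4*pi*(x^2*\<rho>0 x) / (3 * x^2)"
      using ev_right_lt[OF R] by eventually_elim auto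
    ultimately show "((\<lambda>x. 4*pi*(x^2*\<rho>0 x) / (3 * x^2)) \<longlongrightarrow> 4*pi/3 * \<rho>0 0) (at_right 0)"
      by (rule Lim_transform_eventually)
  qed
qed


lemma b_facts:
  assumes tov: "tov_regular R \<rho>0 p0" and R: "0 < R"
  shows "continuous_on {0..<R} (\<lambda>r. 1 - 2 * tov_mass \<rho>0 r / r)"
    and "\<forall>r\<in>{0..<R}. 1 - 2 * tov_mass \<rho>0 r / r > 0"
    and "continuous_on {0..<R} (\<lambda>r. (tov_mass \<rho>0 r + 4 * pi * p0 r * r^3) / (r^2 * (1 - 2 * tov_mass \<rho>0 r / r)))"
proof -
  note mf = m0_facts[OF tov R]
  have cm: "continuous_on {0<..<R} (tov_mass \<rho>0)" using mf(1) by (rule continuous_on_subset) auto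
  have cp: "continuous_on {0<..<R} p0" using tov unfolding tov_regular_def
    by (auto intro: continuous_on_subset)
  have pos: "\<forall>r\<in>{0<..<R}. 1 - 2 * tov_mass \<rho>0 r / r > 0" using tov unfolding tov_regular_def by auto
  have ev: "\<forall>\<^sub>F r in at_right 0. tov_mass \<rho>0 r / r^3 * r^2 = tov_mass \<rho>0 r / r"
    using ev_right_lt[OF R] by eventually_elim (auto simp: power2_eq_square power3_eq_cube)
  have lim: "((\<lambda>r. 1 - 2 * (tov_mass \<rho>0 r / r^3 * r^2)) \<longlongrightarrow> 1 - 2 * (4*pi/3 * \<rho>0 0 * 0^2)) (at_right 0)"
    by (intro tendsto_intros mf(4))
  have lim2: "((\<lambda>r. 1 - 2 * tov_mass \<rho>0 r / r) \<longlongrightarrow> 1) (at_right 0)"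
    using Lim_transform_eventually[OF lim] ev by (simp add: eventually_mono)
  show cb: "continuous_on {0..<R} (\<lambda>r. 1 - 2 * tov_mass \<rho>0 r / r)"
  proof (rule cont_from_parts[OF R])
    show "continuous_on {0<..<R} (\<lambda>r. 1 - 2 * tov_mass \<rho>0 r / r)"
      by (intro continuous_intros cm) auto
    show "((\<lambda>r. 1 - 2 * tov_mass \<rho>0 r / r) \<longlongrightarrow> 1 - 2 * tov_mass \<rho>0 0 / 0) (at_right 0)"
      using lim2 by simp
  qed
  show "\<forall>r\<in>{0..<R}. 1 - 2 * tov_mass \<rho>0 r / r > 0" using pos by (auto simp: le_less)
  show "continuous_on {0..<R} (\<lambda>r. (tov_mass \<rho>0 r + 4 * pi * p0 r * r^3) / (r^2 * (1 - 2 * tov_mass \<rho>0 r / r)))"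
  proof (rule cont_from_parts[OF R])
    show "continuous_on {0<..<R} (\<lambda>r. (tov_mass \<rho>0 r + 4 * pi * p0 r * r^3) / (r^2 * (1 - 2 * tov_mass \<rho>0 r / r)))"
      using pos by (intro continuous_intros cm cp) auto
    have cp0: "continuous_on {0..<R} p0" using tov unfolding tov_regular_def by auto
    have lim3: "((\<lambda>r. r * (tov_mass \<rho>0 r / r^3 + 4 * pi * p0 r) / (1 - 2 * tov_mass \<rho>0 r / r))
       \<longlongrightarrow> 0 * (4*pi/3 * \<rho>0 0 + 4 * pi * p0 0) / 1) (at_right 0)"
      by (intro tendsto_intros mf(4) lim2 cont_at_right[OF R cp0]) auto
    have ev2: "\<forall>\<^sub>F r in at_right 0. r * (tov_mass \<rho>0 r / r^3 + 4 * pi * p0 r) / (1 - 2 * tov_mass \<rho>0 r / r)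
       = (tov_mass \<rho>0 r + 4 * pi * p0 r * r^3) / (r^2 * (1 - 2 * tov_mass \<rho>0 r / r))"
    proof -
      have "r * (tov_mass \<rho>0 r / r^3 + 4 * pi * p0 r) / (1 - 2 * tov_mass \<rho>0 r / r)
       = (tov_mass \<rho>0 r + 4 * pi * p0 r * r^3) / (r^2 * (1 - 2 * tov_mass \<rho>0 r / r))"
        if "0 < r" "r < R" for r
      proof -
        have "1 - 2 * tov_mass \<rho>0 r / r > 0" using pos that by auto
        then show ?thesis using that by (simp add: field_simps power2_eq_square power3_eq_cube)
      qed
      then show ?thesis using ev_right_lt[OF R] by (simp add: eventually_mono)
    qed
    show "((\<lambda>r. (tov_mass \<rho>0 r + 4 * pi * p0 r * r^3) / (r^2 * (1 - 2 * tov_mass \<rho>0 r / r)))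
       \<longlongrightarrow> (tov_mass \<rho>0 0 + 4 * pi * p0 0 * 0^3) / (0^2 * (1 - 2 * tov_mass \<rho>0 0 / 0))) (at_right 0)"
      using Lim_transform_eventually[OF lim3 ev2] by simp
  qed
qed


theorem theoremP3:
  fixes \<rho>0 p0 :: "real \<Rightarrow> real" and R R' \<Delta>p \<delta>\<rho>c :: real
    and m0 g0 I0 \<delta>p1 g1 \<delta>m \<delta>p \<rho> p :: "real \<Rightarrow> real"
  assumes tov0: "tov_regular R \<rho>0 p0"
    and m0_def: "m0 = tov_mass \<rho>0"
    and g0_def: "g0 = (\<lambda>r. (m0 r + 4 * pi * p0 r * r^3) / (r^2 * (1 - 2 * m0 r / r)))"
    and I0_def: "I0 = (\<lambda>r. integral {0..r} g0)"
    and dp1_def: "\<delta>p1 = (\<lambda>r. \<Delta>p * sqrt (1 - 2 * m0 r / r) * exp (- 2 * I0 r)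
          / (1 + 4 * pi * \<Delta>p * integral {0..r} (\<lambda>s. s * exp (- 2 * I0 s) / sqrt (1 - 2 * m0 s / s))))"
    and g1_def: "g1 = (\<lambda>r. g0 r + 4 * pi * \<delta>p1 r * r / (1 - 2 * m0 r / r))"
    and dm_def: "\<delta>m = (\<lambda>r. 4 * pi * r^3 * \<delta>\<rho>c / (3 * (1 + r * g1 r)^2)
          * exp (2 * integral {0..r} (\<lambda>s. g1 s * (1 - s * g1 s) / (1 + s * g1 s))))"
    and dp_def: "\<delta>p = (\<lambda>r. \<delta>p1 r - \<delta>m r / (4 * pi * r^3)
          * (1 + 8 * pi * (p0 r + \<delta>p1 r) * r^2) / (1 - 2 * m0 r / r))"
    and rho_def: "\<rho> = (\<lambda>r. if r = 0 then \<rho>0 0 + \<delta>\<rho>c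
          else deriv (\<lambda>s. m0 s + \<delta>m s) r / (4 * pi * r^2))"
    and p_def: "p = (\<lambda>r. if r = 0 then p0 0 + (\<Delta>p - \<delta>\<rho>c / 3) else p0 r + \<delta>p r)"
    and R'_le: "R' \<le> R"
    and den1: "\<forall>r\<in>{0..<R'}. 1 + 4 * pi * \<Delta>p
          * integral {0..r} (\<lambda>s. s * exp (- 2 * I0 s) / sqrt (1 - 2 * m0 s / s)) > 0"
    and den2: "\<forall>r\<in>{0..<R'}. 1 + r * g1 r > 0"
    and den3: "\<forall>r\<in>{0<..<R'}. 1 - 2 * (m0 r + \<delta>m r) / r > 0"
  shows "tov_regular R' \<rho> p
     \<and> (\<forall>r\<in>{0..<R'}. tov_mass \<rho> r = m0 r + \<delta>m r)
     \<and> \<rho> 0 = \<rho>0 0 + \<delta>\<rho>c \<and> p 0 = p0 0 + (\<Delta>p - \<delta>\<rho>c / 3)"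
proof (cases "R' \<le> 0")
  case True
  then have e1: "{0..<R'} = {}" and e2: "{0<..<R'} = {}" by auto
  show ?thesis unfolding tov_regular_def e1 e2 using rho_def p_def by simp
next
  case False
  then have R': "0 < R'" by simp
  then have R: "0 < R" using R'_le by simp
  define S where "S = {0..<R'}"
  have SR: "S \<subseteq> {0..<R}" using R'_le by (auto simp: S_def)
  note mf = m0_facts[OF tov0 R]
  note bf = b_facts[OF tov0 R]
  define b where "b = (\<lambda>r. 1 - 2 * m0 r / r)"
  have cm0: "continuous_on {0..<R} m0" using mf m0_def by simp
  have m00: "m0 0 = 0" using mf m0_def by simp
  have dM0: "(m0 has_real_derivative 4*pi*(x^2*\<rho>0 x)) (at x)" if "0 < x" "x < R" for x
    using mf(3)[OF that] m0_def by simp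
  have Alim: "((\<lambda>r. m0 r / r^3) \<longlongrightarrow> 4*pi/3 * \<rho>0 0) (at_right 0)" using mf(4) m0_def by simp
  have cb: "continuous_on {0..<R} b" using bf(1) by (simp add: b_def m0_def)
  have bpos: "\<And>r. r \<in> {0..<R} \<Longrightarrow> b r > 0" using bf(2) by (simp add: b_def m0_def)
  have b0: "b 0 = 1" by (simp add: b_def)
  have cg0: "continuous_on {0..<R} g0" using bf(3) by (simp add: g0_def m0_def)
  have c\<rho>0: "continuous_on {0..<R} \<rho>0" and cp0: "continuous_on {0..<R} p0"
    using tov0 unfolding tov_regular_def by auto
  have dp0: "(p0 has_real_derivative - (\<rho>0 x + p0 x) * (m0 x + 4 * pi * p0 x * x^3) / (x^2 * b x)) (at x)"
    if "0 < x" "x < R" for x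
    using tov0 that unfolding tov_regular_def by (auto simp: m0_def b_def)
  have g0_eq: "g0 x = (m0 x + 4 * pi * p0 x * x^3) / (x^2 * b x)" for x by (simp add: g0_def b_def)
  have cI0: "continuous_on {0..<R} I0" unfolding I0_def by (rule integral_cont[OF cg0 R])
  have dI0: "(I0 has_real_derivative g0 x) (at x)" if "0 < x" "x < R" for x
    unfolding I0_def by (rule integral_deriv[OF cg0 that])
  have I00: "I0 0 = 0" by (simp add: I0_def)
  define k where "k = (\<lambda>s. s * exp (- 2 * I0 s) / sqrt (b s))"
  have ck: "continuous_on {0..<R} k" unfolding k_def
    by (intro continuous_intros cI0 cb) (use bpos in fastforce)
  define K where "K = (\<lambda>r. integral {0..r} k)"
  have cK: "continuous_on {0..<R} K" unfolding K_def by (rule integral_cont[OF ck R])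
  have dK: "(K has_real_derivative k x) (at x)" if "0 < x" "x < R" for x
    unfolding K_def by (rule integral_deriv[OF ck that])
  have K0: "K 0 = 0" by (simp add: K_def)
  define Q where "Q = (\<lambda>r. 1 + 4 * pi * \<Delta>p * K r)"
  have kk: "(\<lambda>s. s * exp (- 2 * I0 s) / sqrt (1 - 2 * m0 s / s)) = k" by (simp add: k_def b_def)
  have Qpos: "\<And>r. r \<in> S \<Longrightarrow> Q r > 0" using den1 unfolding S_def Q_def K_def kk by auto
  have dp1_eq: "\<delta>p1 = (\<lambda>r. \<Delta>p * sqrt (b r) * exp (- 2 * I0 r) / Q r)"
    unfolding dp1_def Q_def K_def kk by (simp add: b_def)
  have cdp1: "continuous_on S \<delta>p1" unfolding dp1_eq Q_def
    by (intro continuous_intros continuous_on_subset[OF cb SR] continuous_on_subset[OF cI0 SR]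
        continuous_on_subset[OF cK SR]) (use Qpos in \<open>fastforce simp: Q_def\<close>)
  have dp10: "\<delta>p1 0 = \<Delta>p" by (simp add: dp1_eq b0 I00 Q_def K0)
  define p1 where "p1 = (\<lambda>r. p0 r + \<delta>p1 r)"
  have cp1: "continuous_on S p1" unfolding p1_def
    by (intro continuous_intros cdp1 continuous_on_subset[OF cp0 SR])
  have g1_eq: "g1 = (\<lambda>r. g0 r + 4 * pi * \<delta>p1 r * r / b r)" unfolding g1_def b_def ..
  have cg1: "continuous_on S g1" unfolding g1_eq
    by (intro continuous_intros cdp1 continuous_on_subset[OF cg0 SR] continuous_on_subset[OF cb SR])
      (use bpos SR in fastforce)
  have den2': "\<And>r. r \<in> S \<Longrightarrow> 1 + r * g1 r > 0" using den2 by (auto simp: S_def)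
  define h where "h = (\<lambda>s. g1 s * (1 - s * g1 s) / (1 + s * g1 s))"
  have ch: "continuous_on S h" unfolding h_def
    by (intro continuous_intros cg1) (use den2' in fastforce)
  have ch': "continuous_on {0..<R'} h" using ch by (simp add: S_def)
  define J where "J = (\<lambda>r. integral {0..r} h)"
  have cJ: "continuous_on S J" unfolding J_def S_def by (rule integral_cont[OF ch' R'])
  have dJ: "(J has_real_derivative h x) (at x)" if "0 < x" "x < R'" for x
    unfolding J_def by (rule integral_deriv[OF ch' that])
  have J0: "J 0 = 0" by (simp add: J_def)
  have dm_eq: "\<delta>m = (\<lambda>r. 4 * pi * r^3 * \<delta>\<rho>c / (3 * (1 + r * g1 r)^2) * exp (2 * J r))"
    unfolding dm_def J_def h_def ..
  have cdm: "continuous_on S \<delta>m" unfolding dm_eq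
    by (intro continuous_intros cg1 cJ) (use den2' in fastforce)
  have dmz: "\<delta>m 0 = 0" by (simp add: dm_eq)
  have db: "(b has_real_derivative - (2 * ((4*pi*x^2*\<rho>0 x) * x - m0 x) / x^2)) (at x)"
    if "0 < x" "x < R" for x
    unfolding b_def using that
    by (auto intro!: derivative_eq_intros dM0[OF that] simp: field_simps power2_eq_square)
  have dp1': "(p1 has_real_derivative - (\<rho>0 x + p1 x) * g1 x) (at x)"
    if "0 < x" "x < R'" for x
  proof -
    have xR: "x < R" using that R'_le by simp
    have bx: "b x > 0" using bpos xR that by simp
    have Qx: "Q x > 0" using Qpos that by (simp add: S_def)
    define B where "B = - (2 * ((4*pi*x^2*\<rho>0 x) * x - m0 x) / x^2)"
    have dsq: "((\<lambda>r. sqrt (b r)) has_real_derivative B / (2 * sqrt (b x))) (at x)"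
      using bx by (auto intro!: derivative_eq_intros db[OF that(1) xR] simp: B_def field_simps)
    have dE: "((\<lambda>r. exp (- 2 * I0 r)) has_real_derivative - 2 * g0 x * exp (- 2 * I0 x)) (at x)"
      by (auto intro!: derivative_eq_intros dI0[OF that(1) xR])
    have dQ: "(Q has_real_derivative 4*pi*\<Delta>p*(x * exp (- 2 * I0 x) / sqrt (b x))) (at x)"
      unfolding Q_def by (auto intro!: derivative_eq_intros dK[OF that(1) xR] simp: k_def)
    have d1: "(\<delta>p1 has_real_derivative
       ((\<Delta>p * sqrt (b x) * (- 2 * g0 x * exp (- 2 * I0 x)) + \<Delta>p * (B / (2 * sqrt (b x))) * exp (- 2 * I0 x)) * Q x
         - \<Delta>p * sqrt (b x) * exp (- 2 * I0 x) * (4*pi*\<Delta>p*(x * exp (- 2 * I0 x) / sqrt (b x)))) / (Q x * Q x)) (at x)"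
      unfolding dp1_eq by (rule DERIV_divide[OF DERIV_mult'[OF DERIV_cmult[OF dsq] dE] dQ]) (use Qx in simp)
    have d2: "(p1 has_real_derivative - (\<rho>0 x + p0 x) * (m0 x + 4 * pi * p0 x * x^3) / (x^2 * b x) +
       ((\<Delta>p * sqrt (b x) * (- 2 * g0 x * exp (- 2 * I0 x)) + \<Delta>p * (B / (2 * sqrt (b x))) * exp (- 2 * I0 x)) * Q x
         - \<Delta>p * sqrt (b x) * exp (- 2 * I0 x) * (4*pi*\<Delta>p*(x * exp (- 2 * I0 x) / sqrt (b x)))) / (Q x * Q x)) (at x)"
      unfolding p1_def by (rule DERIV_add[OF dp0[OF that(1) xR] d1])
    have e0: "- (\<rho>0 x + p0 x) * (m0 x + 4 * pi * p0 x * x^3) / (x^2 * b x) = - (\<rho>0 x + p0 x) * g0 x"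
      by (simp add: g0_eq)
    have "- (\<rho>0 x + p0 x) * g0 x +
       ((\<Delta>p * sqrt (b x) * (- 2 * g0 x * exp (- 2 * I0 x)) + \<Delta>p * (B / (2 * sqrt (b x))) * exp (- 2 * I0 x)) * Q x
         - \<Delta>p * sqrt (b x) * exp (- 2 * I0 x) * (4*pi*\<Delta>p*(x * exp (- 2 * I0 x) / sqrt (b x)))) / (Q x * Q x)
      = - (\<rho>0 x + (p0 x + \<Delta>p * sqrt (b x) * exp (- 2 * I0 x) / Q x)) * (g0 x + 4*pi*(\<Delta>p * sqrt (b x) * exp (- 2 * I0 x) / Q x)*x / b x)"
      by (rule P1_alg2[OF that(1) _ _ _ _ B_def g0_eq]) (use bx Qx in \<open>auto simp: b_def\<close>)
    also have "\<dots> = - (\<rho>0 x + p1 x) * g1 x" by (simp add: p1_def dp1_eq g1_eq)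
    finally show ?thesis using d2 unfolding e0 by simp
  qed
  define A where "A = (\<lambda>r. m0 r / r^3)"
  define G where "G = (\<lambda>r. ((4*pi*\<rho>0 r + 4*pi*r*(-(\<rho>0 r + p1 r)*g1 r) + 12*pi*p1 r)*b r
      - (A r + 4*pi*p1 r)*(2*b r + r*(-2*r*(4*pi*\<rho>0 r - A r))))/(b r)^2)"
  have g1_alt: "g1 r = (m0 r + 4*pi*p1 r*r^3)/(r^2*b r)" if "0 < r" "r < R'" for r
  proof -
    have "b r > 0" using bpos that R'_le by simp
    then show ?thesis using that unfolding g1_eq g0_eq p1_def by (simp add: field_simps power2_eq_square power3_eq_cube)
  qed
  have dg1: "(g1 has_real_derivative G x) (at x)" if "0 < x" "x < R'" for x
  proof -
    have xR: "x < R" using that R'_le by simp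
    have bx: "b x > 0" using bpos xR that by simp
    have "((\<lambda>r. (m0 r + 4*pi*p1 r*r^3)/(r^2*b r)) has_real_derivative G x) (at x)"
      apply (rule derivative_eq_intros dM0[OF that(1) xR] dp1'[OF that] db[OF that(1) xR] refl)+
      using bx that apply simp
      using bx that apply (simp add: G_def A_def field_simps power2_eq_square power3_eq_cube)
      done
    then show ?thesis
      by (rule has_field_derivative_transform_within_open[where S="{0<..<R'}"])
        (use that g1_alt in auto)
  qed
  define Dm where "Dm = (\<lambda>x. \<delta>m x * (3 / x + 3 * g1 x - 2 * x * G x - 2 * x * (g1 x)^2) / (1 + x * g1 x))"
  have ddm: "(\<delta>m has_real_derivative Dm x) (at x)" if "0 < x" "x < R'" for x
  proof -
    have dx: "1 + x * g1 x > 0" using den2' that by (simp add: S_def)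
    have dE: "((\<lambda>r. exp (2 * J r)) has_real_derivative exp (2 * J x) * (2 * h x)) (at x)"
      by (auto intro!: derivative_eq_intros dJ[OF that])
    show ?thesis unfolding dm_eq
      apply (rule derivative_eq_intros dg1[OF that] dE refl)+
      using dx apply simp
      apply (rule refl)
      apply (rule dE)
      using dm_alg[OF that(1) dx, where G="G x" and e="exp (2 * J x)" and c=\<delta>\<rho>c] apply (simp add: Dm_def dm_eq h_def)
      done
  qed
  have rho_pos: "\<rho> x = \<rho>0 x + Dm x / (4 * pi * x^2)" if "0 < x" "x < R'" for x
  proof -
    have xR: "x < R" using that R'_le by simp
    have "deriv (\<lambda>s. m0 s + \<delta>m s) x = 4*pi*(x^2*\<rho>0 x) + Dm x"
      by (rule DERIV_imp_deriv[OF DERIV_add[OF dM0[OF that(1) xR] ddm[OF that]]])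
    then show ?thesis using that unfolding rho_def by (simp add: field_simps)
  qed
  have mass: "tov_mass \<rho> r = m0 r + \<delta>m r" if "r \<in> {0..<R'}" for r
  proof -
    have r: "0 \<le> r" "r < R'" using that by auto
    have "((\<lambda>s. s^2 * \<rho> s) has_integral ((m0 r + \<delta>m r) / (4*pi) - (m0 0 + \<delta>m 0) / (4*pi))) {0..r}"
    proof (rule fundamental_theorem_of_calculus_interior[OF r(1)])
      have "continuous_on {0..r} m0" by (rule continuous_on_subset[OF cm0]) (use r R'_le in auto)
      moreover have "continuous_on {0..r} \<delta>m" by (rule continuous_on_subset[OF cdm]) (use r in \<open>auto simp: S_def\<close>)
      ultimately show "continuous_on {0..r} (\<lambda>s. (m0 s + \<delta>m s) / (4*pi))"
        by (intro continuous_intros) auto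
      fix s assume s: "s \<in> {0<..<r}"
      then have s': "0 < s" "s < R'" using r by auto
      have "((\<lambda>s. (m0 s + \<delta>m s) / (4*pi)) has_real_derivative (4*pi*(s^2*\<rho>0 s) + Dm s) / (4*pi)) (at s)"
        by (intro DERIV_cdivide DERIV_add dM0 ddm) (use s' R'_le in auto)
      moreover have "(4*pi*(s^2*\<rho>0 s) + Dm s) / (4*pi) = s^2 * \<rho> s"
        using rho_pos[OF s'] s' by (simp add: field_simps)
      ultimately show "((\<lambda>s. (m0 s + \<delta>m s) / (4*pi)) has_vector_derivative s^2 * \<rho> s) (at s)"
        by (simp add: has_real_derivative_iff_has_vector_derivative)
    qed
    then have "integral {0..r} (\<lambda>s. s^2 * \<rho> s) = (m0 r + \<delta>m r) / (4*pi)"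
      using m00 dmz by (simp add: integral_unique)
    then show ?thesis by (simp add: tov_mass_def)
  qed
  define W where "W = (\<lambda>r. r^2 * G r)"
  have S0: "{0<..<R'} \<subseteq> S" by (auto simp: S_def)
  have cW: "continuous_on S W" unfolding S_def
  proof (rule cont_from_parts[OF R'])
    have bnz: "\<And>r. r \<in> {0<..<R'} \<Longrightarrow> b r \<noteq> 0" using bpos R'_le by (metis atLeastLessThan_iff greaterThanLessThan_iff less_eq_real_def less_le_trans order.strict_implies_not_eq)
    show "continuous_on {0<..<R'} W" unfolding W_def G_def A_def
      by (intro continuous_intros continuous_on_subset[OF cp1 S0] continuous_on_subset[OF cg1 S0]
          continuous_on_subset[OF cb] continuous_on_subset[OF c\<rho>0] continuous_on_subset[OF cm0])
        (use R'_le bnz in auto)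
    have lb: "(b \<longlongrightarrow> 1) (at_right 0)" using cont_at_right[OF R cb] b0 by simp
    have cp1': "continuous_on {0..<R'} p1" and cg1': "continuous_on {0..<R'} g1" using cp1 cg1 by (auto simp: S_def)
    have "((\<lambda>r. r^2 * G r) \<longlongrightarrow> 0^2 * (((4*pi*\<rho>0 0 + 4*pi*0*(-(\<rho>0 0 + p1 0)*g1 0) + 12*pi*p1 0)*1
      - (4*pi/3 * \<rho>0 0 + 4*pi*p1 0)*(2*1 + 0*(-2*0*(4*pi*\<rho>0 0 - 4*pi/3 * \<rho>0 0))))/1^2)) (at_right 0)"
      unfolding G_def A_def
      by (intro tendsto_intros lb Alim cont_at_right[OF R c\<rho>0] cont_at_right[OF R' cp1'] cont_at_right[OF R' cg1']) auto
    then show "(W \<longlongrightarrow> W 0) (at_right 0)" by (simp add: W_def)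
  qed
  define Rho where "Rho = (\<lambda>r. \<rho>0 r + \<delta>\<rho>c * exp (2 * J r) / (3 * (1 + r * g1 r)^2)
      * (3 + 3 * r * g1 r - 2 * W r - 2 * r^2 * (g1 r)^2) / (1 + r * g1 r))"
  have cRho: "continuous_on S Rho" unfolding Rho_def
    by (intro continuous_intros continuous_on_subset[OF c\<rho>0 SR] cJ cg1 cW) (use den2' in fastforce)+
  have rho_Rho: "\<rho> r = Rho r" if "r \<in> S" for r
  proof (cases "r = 0")
    case True
    have "\<rho> 0 = \<rho>0 0 + \<delta>\<rho>c" by (simp add: rho_def)
    moreover have "Rho 0 = \<rho>0 0 + \<delta>\<rho>c" by (simp add: Rho_def J0 W_def)
    ultimately show ?thesis using True by simp
  next
    case False
    then have r: "0 < r" "r < R'" using that by (auto simp: S_def)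
    have dx: "1 + r * g1 r > 0" using den2' that by simp
    have eq: "Dm r / (4*pi*r^2) = \<delta>\<rho>c * exp (2 * J r) / (3 * (1 + r * g1 r)^2)
      * (3 + 3 * r * g1 r - 2 * W r - 2 * r^2 * (g1 r)^2) / (1 + r * g1 r)"
      unfolding Dm_def dm_eq W_def
      by (rule rho_alg[OF r(1) dx, where y="g1 r" and G="G r" and e="exp (2 * J r)" and c=\<delta>\<rho>c])
    have "\<rho> r = \<rho>0 r + Dm r / (4*pi*r^2)" by (rule rho_pos[OF r])
    also have "\<dots> = Rho r" unfolding Rho_def using eq by (rule arg_cong[where f="\<lambda>z. \<rho>0 r + z"])
    finally show ?thesis .
  qed
  have cRho': "continuous_on S \<rho>" by (rule continuous_on_eq[OF cRho]) (simp add: rho_Rho)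
  define Pe where "Pe = (\<lambda>r. p1 r - \<delta>\<rho>c * exp (2 * J r) / (3 * (1 + r * g1 r)^2) * (1 + 2 * r * g1 r))"
  have cPe: "continuous_on S Pe" unfolding Pe_def
    by (intro continuous_intros cp1 cJ cg1) (use den2' in fastforce)+
  have p_Pe: "p r = Pe r" if "r \<in> S" for r
  proof (cases "r = 0")
    case True
    then show ?thesis by (simp add: p_def Pe_def J0 p1_def dp10)
  next
    case False
    then have r: "0 < r" "r < R'" using that by (auto simp: S_def)
    have dx: "1 + r * g1 r > 0" using den2' that by simp
    have bx: "b r > 0" using bpos r R'_le by simp
    have "p r = p1 r - \<delta>m r / (4 * pi * r^3) * (1 + 8 * pi * p1 r * r^2) / b r"
      using False by (simp add: p_def dp_def p1_def b_def)
    also have "\<dots> = p1 r - (\<delta>m r / (4 * pi * r^3)) * ((1 + 8 * pi * p1 r * r^2) / b r)" by simp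
    also have "(1 + 8 * pi * p1 r * r^2) / b r = 1 + 2 * r * g1 r"
      unfolding g1_alt[OF r] by (rule b_alg[OF r(1) bx]) (simp add: b_def)
    also have "\<delta>m r / (4 * pi * r^3) = \<delta>\<rho>c * exp (2 * J r) / (3 * (1 + r * g1 r)^2)"
      unfolding dm_eq by (rule dm_div_alg[OF r(1)])
    finally show ?thesis by (simp add: Pe_def)
  qed
  have cP: "continuous_on S p" by (rule continuous_on_eq[OF cPe]) (simp add: p_Pe)
  define Pf where "Pf = (\<lambda>r. p1 r - \<delta>m r * (1 + 2 * r * g1 r) / (4 * pi * r^3))"
  have p_Pf: "p r = Pf r" if r: "0 < r" "r < R'" for r
  proof -
    have bx: "b r > 0" using bpos r R'_le by simp
    have "p r = p1 r - \<delta>m r / (4 * pi * r^3) * (1 + 8 * pi * p1 r * r^2) / b r"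
      using r by (simp add: p_def dp_def p1_def b_def)
    also have "\<dots> = p1 r - (\<delta>m r / (4 * pi * r^3)) * ((1 + 8 * pi * p1 r * r^2) / b r)" by simp
    also have "(1 + 8 * pi * p1 r * r^2) / b r = 1 + 2 * r * g1 r"
      unfolding g1_alt[OF r] by (rule b_alg[OF r(1) bx]) (simp add: b_def)
    finally show ?thesis by (simp add: Pf_def)
  qed
  have dP: "(p has_real_derivative - (\<rho> x + p x) * (tov_mass \<rho> x + 4 * pi * p x * x^3)
        / (x^2 * (1 - 2 * tov_mass \<rho> x / x))) (at x)" if x: "0 < x" "x < R'" for x
  proof -
    have xR: "x < R" using x R'_le by simp
    have bx: "b x > 0" using bpos xR x by simp
    have dx: "1 + x * g1 x > 0" using den2' x by (simp add: S_def)
    have d3: "1 - 2 * (m0 x + \<delta>m x) / x > 0" using den3 x by simp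
    have "(Pf has_real_derivative - (\<rho>0 x + p1 x) * g1 x - (Dm x * (1 + 2*x*g1 x) + \<delta>m x * (2*g1 x + 2*x*G x)) / (4*pi*x^3)
      + 3 * \<delta>m x * (1 + 2*x*g1 x) / (4*pi*x^4)) (at x)"
      unfolding Pf_def
      apply (rule derivative_eq_intros dp1'[OF x] ddm[OF x] dg1[OF x] refl)+
      using x apply simp
      apply (rule refl)
      using x apply (simp add: field_simps power2_eq_square power3_eq_cube power4_eq_xxxx)
      done
    also have "- (\<rho>0 x + p1 x) * g1 x - (Dm x * (1 + 2*x*g1 x) + \<delta>m x * (2*g1 x + 2*x*G x)) / (4*pi*x^3)
      + 3 * \<delta>m x * (1 + 2*x*g1 x) / (4*pi*x^4)
      = - ((\<rho>0 x + Dm x / (4*pi*x^2)) + (p1 x - \<delta>m x * (1 + 2*x*g1 x) / (4*pi*x^3)))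
      * ((m0 x + \<delta>m x) + 4 * pi * (p1 x - \<delta>m x * (1 + 2*x*g1 x) / (4*pi*x^3)) * x^3)
      / (x^2 * (1 - 2 * (m0 x + \<delta>m x) / x))"
      by (rule final_alg[OF x(1) bx _ g1_alt[OF x] dx d3, symmetric]) (simp_all add: b_def Dm_def)
    also have "\<dots> = - (\<rho> x + p x) * (tov_mass \<rho> x + 4 * pi * p x * x^3)
        / (x^2 * (1 - 2 * tov_mass \<rho> x / x))"
      using rho_pos[OF x] p_Pf[OF x] mass[of x] x by (simp add: Pf_def)
    finally have "(Pf has_real_derivative - (\<rho> x + p x) * (tov_mass \<rho> x + 4 * pi * p x * x^3)
        / (x^2 * (1 - 2 * tov_mass \<rho> x / x))) (at x)" .
    then show ?thesis
      by (rule has_field_derivative_transform_within_open[where S="{0<..<R'}"])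
        (use x p_Pf in auto)
  qed
  show ?thesis
  proof (intro conjI)
    show "tov_regular R' \<rho> p" unfolding tov_regular_def
    proof (intro conjI ballI)
      show "continuous_on {0..<R'} \<rho>" using cRho' by (simp add: S_def)
      show "continuous_on {0..<R'} p" using cP by (simp add: S_def)
      fix r assume r: "r \<in> {0<..<R'}"
      then show "1 - 2 * tov_mass \<rho> r / r > 0" using mass[of r] den3 by auto
      show "(p has_real_derivative - (\<rho> r + p r) * (tov_mass \<rho> r + 4 * pi * p r * r^3)
        / (r^2 * (1 - 2 * tov_mass \<rho> r / r))) (at r)" using dP r by auto
    qed
    show "\<forall>r\<in>{0..<R'}. tov_mass \<rho> r = m0 r + \<delta>m r" using mass by auto
    show "\<rho> 0 = \<rho>0 0 + \<delta>\<rho>c" by (simp add: rho_def)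
    show "p 0 = p0 0 + (\<Delta>p - \<delta>\<rho>c / 3)" by (simp add: p_def)
  qed
qed

end
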